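(* Let $\alpha>-1$, let $\{\lambda_n\}_{n=0}^\infty$ be a sequence of real numbers, and let $T:\mathbb{R}[x]\to\mathbb{R}[x]$ be the linear operator defined by $T(L_n^{(\alpha)}(x))=\lambda_nL_n^{(\alpha)}(x)$ for all $n\in\mathbb{N}$. Then the symbol of $T$ is $$G_T(x,y)=e^{-xy}\sum_{n=0}^{\infty}a_n y^n L_n^{(\alpha)}(xy+x),\qquad a_n=\sum_{k=0}^{n}(-1)^{n-k}\binom{n}{k}\lambda_k,$$ as an identity of formal power series in $y$ with polynomial coefficients in $x$.
   Context: For $\alpha>-1$, $L_n^{(\alpha)}(x)=\sum_{k=0}^{n}\binom{n+\alpha}{n-k}\frac{(-x)^k}{k!}$, where $\binom{m+\alpha}{j}=\frac{(m+\alpha)\cdots(m+\alpha-j+1)}{j!}$. The symbol of a linear operator $T:\mathbb{R}[x]\to\mathbb{R}[x]$ is the formal power series $G_T(x,y)=\sum_{n=0}^\infty \frac{(-1)^nT(x^n)}{n!}y^n$ (formally, $G_T=T(e^{-xy})$ with $T$ acting in $x$). *)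

theory Defs
  imports "HOL-Computational_Algebra.Computational_Algebra"
begin

definition laguerre :: "nat \<Rightarrow> real \<Rightarrow> real poly" where
  "laguerre n \<alpha> = (\<Sum>k\<le>n. smult (((real n + \<alpha>) gchoose (n - k)) * (-1) ^ k / fact k) (monom 1 k))"

text \<open>Symbol of a linear operator T on R[x]:
  G_T(x,y) = sum_n (-1)^n T(x^n) / n! y^n, a power series in y over R[x].\<close>
definition symbol :: "(real poly \<Rightarrow> real poly) \<Rightarrow> real poly fps" where
  "symbol T = Abs_fps (\<lambda>n. smult ((-1) ^ n / fact n) (T (monom 1 n)))"

text \<open>e^{-xy} as a power series in y over R[x]: coefficient of y^j is (-x)^j / j!.\<close>
definition exp_mxy :: "real poly fps" where
  "exp_mxy = Abs_fps (\<lambda>j. smult ((-1) ^ j / fact j) (monom 1 j))"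

text \<open>Formal sum of a family of power series f n with subdegree (f n) >= n
  (the coefficient of y^m only receives contributions from n <= m).\<close>
definition fps_order_sum :: "(nat \<Rightarrow> 'a::comm_monoid_add fps) \<Rightarrow> 'a fps" where
  "fps_order_sum f = Abs_fps (\<lambda>m. \<Sum>n\<le>m. fps_nth (f n) m)"

text \<open>For p in R[x], p(xy + x) as a polynomial in y with coefficients in R[x].\<close>
definition subst_xy_x :: "real poly \<Rightarrow> real poly poly" where
  "subst_xy_x p = pcompose (map_poly (\<lambda>c. [:c:]) p) [: [:0, 1:], [:0, 1:] :]"

end

theory Submission
  imports Defs
begin


definition lc :: "real \<Rightarrow> nat \<Rightarrow> nat \<Rightarrow> real" where
  "lc \<alpha> n i = ((real n + \<alpha>) gchoose (n - i)) * (-1) ^ i / fact i"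

lemma coeff_laguerre: "coeff (laguerre n \<alpha>) i = (if i \<le> n then lc \<alpha> n i else 0)"
proof -
  have "coeff (laguerre n \<alpha>) i = (\<Sum>k\<le>n. if k = i then lc \<alpha> n k else 0)"
    unfolding laguerre_def lc_def coeff_sum coeff_smult coeff_monom by (rule sum.cong) auto
  then show ?thesis by simp
qed

lemma degree_laguerre: "degree (laguerre n \<alpha>) \<le> n"
  by (rule degree_le) (simp add: coeff_laguerre)

lemma pcompose_sum_alt:
  "pcompose (P :: 'a::comm_ring_1 poly) Q = (\<Sum>k\<le>degree P. smult (coeff P k) (Q ^ k))"
proof -
  have "degree (map_poly (\<lambda>x. [:x:]) P) = degree P"
    by (rule degree_map_poly) auto
  then show ?thesis
    unfolding pcompose_altdef poly_altdef
    by (intro sum.cong) (auto simp: coeff_map_poly)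
qed

lemma coeff_Qpow:
  "coeff ([: [:0, 1:], [:0, 1:] :] ^ k) r = smult (real (k choose r)) (monom (1::real) k)"
proof (cases "r \<le> k")
  case True
  have "[:0, 1::real:] ^ r * [:0, 1:] ^ (k - r) = [:0, 1:] ^ k"
    using True by (metis power_add le_add_diff_inverse)
  then show ?thesis using True
    by (simp add: coeff_linear_poly_power monom_altdef of_nat_poly mult.assoc)
next
  case False
  have "degree ([: [:0, 1:], [:0, 1::real:] :] ^ k) \<le> k"
    using degree_power_le[of "[: [:0, 1:], [:0, 1::real:] :]" k] by simp
  then show ?thesis using False by (simp add: coeff_eq_0)
qed

lemma coeff_subst:
  "coeff (coeff (subst_xy_x p) r) i = coeff p i * real (i choose r)"
proof -
  have dm: "degree (map_poly (\<lambda>c. [:c:]) p) = degree p"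
    by (rule degree_map_poly) auto
  have "coeff (coeff (subst_xy_x p) r) i =
     (\<Sum>k\<le>degree p. coeff p k * real (k choose r) * (if k = i then 1 else 0))"
    unfolding subst_xy_x_def pcompose_sum_alt dm coeff_sum
    by (intro sum.cong) (auto simp: coeff_map_poly coeff_Qpow coeff_monom)
  also have "\<dots> = (if i \<le> degree p then coeff p i * real (i choose r) else 0)"
    by (simp add: mult.assoc if_distrib[where f="\<lambda>x. _ * x"] cong: if_cong)
  also have "\<dots> = coeff p i * real (i choose r)"
    by (simp add: coeff_eq_0)
  finally show ?thesis .
qed



lemma alt_split:
  fixes f :: "nat \<Rightarrow> real"
  shows "(\<Sum>j\<le>Suc q. (-1)^j * real (Suc q choose j) * f j) =
         (\<Sum>j\<le>q. (-1)^j * real (q choose j) * (f j - f (Suc j)))"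
proof -
  have A: "(\<Sum>j\<le>q. (-1)^j * real (q choose j) * f j) =
        f 0 - (\<Sum>j\<le>q. (-1)^j * real (q choose Suc j) * f (Suc j))"
  proof -
    have "(\<Sum>j\<le>q. (-1)^j * real (q choose j) * f j) = (\<Sum>j\<le>Suc q. (-1)^j * real (q choose j) * f j)"
      by (simp add: sum.atMost_Suc)
    also have "\<dots> = f 0 + (\<Sum>j\<le>q. (-1)^Suc j * real (q choose Suc j) * f (Suc j))"
      by (subst sum.atMost_Suc_shift) simp
    also have "\<dots> = f 0 - (\<Sum>j\<le>q. (-1)^j * real (q choose Suc j) * f (Suc j))"
      by (simp add: sum_negf[symmetric])
    finally show ?thesis .
  qed
  have "(\<Sum>j\<le>Suc q. (-1)^j * real (Suc q choose j) * f j) =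
        f 0 + (\<Sum>j\<le>q. (-1)^Suc j * real (Suc q choose Suc j) * f (Suc j))"
    by (subst sum.atMost_Suc_shift) simp
  also have "\<dots> = f 0 - (\<Sum>j\<le>q. (-1)^j * real (q choose j) * f (Suc j))
                      - (\<Sum>j\<le>q. (-1)^j * real (q choose Suc j) * f (Suc j))"
    by (simp add: sum_negf[symmetric] sum_subtractf[symmetric] algebra_simps sum.distrib[symmetric])
  also have "\<dots> = (\<Sum>j\<le>q. (-1)^j * real (q choose j) * (f j - f (Suc j)))"
    using A by (simp add: algebra_simps sum_subtractf)
  finally show ?thesis .
qed

lemma alt_sum_choose:
  "(\<Sum>j\<le>q. (-1)^j * real (q choose j)) = (if q = 0 then 1 else 0)"
  using choose_alternating_sum[of q, where 'a=real] by auto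

lemma diff_identity:
  "(\<Sum>j\<le>q. (-1)^j * real (q choose j) * real ((p + j) choose n)) =
   (if q \<le> n then (-1)^q * real (p choose (n - q)) else 0)"
proof (induction q arbitrary: p n)
  case 0
  then show ?case by simp
next
  case (Suc q)
  have "(\<Sum>j\<le>Suc q. (-1)^j * real (Suc q choose j) * real ((p + j) choose n)) =
        (\<Sum>j\<le>q. (-1)^j * real (q choose j) * (real ((p + j) choose n) - real ((p + Suc j) choose n)))"
    by (rule alt_split)
  also have "\<dots> = (if Suc q \<le> n then (-1)^Suc q * real (p choose (n - Suc q)) else 0)"
  proof (cases n)
    case 0
    then show ?thesis by simp
  next
    case (Suc n')
    have "(\<Sum>j\<le>q. (-1)^j * real (q choose j) * (real ((p + j) choose n) - real ((p + Suc j) choose n)))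
        = - (\<Sum>j\<le>q. (-1)^j * real (q choose j) * real ((p + j) choose n'))"
      by (simp add: Suc sum_negf[symmetric] algebra_simps)
    also have "\<dots> = (if Suc q \<le> n then (-1)^Suc q * real (p choose (n - Suc q)) else 0)"
      using Suc.IH[of p n'] by (simp add: \<open>n = Suc n'\<close>)
    finally show ?thesis .
  qed
  finally show ?case .
qed

lemma alt_choose_mult:
  assumes "i \<le> k"
  shows "(\<Sum>n\<le>k. (-1)^(n-i) * real (k choose n) * real (n choose i)) = (if k = i then 1 else 0)"
proof -
  have "(\<Sum>n\<le>k. (-1)^(n-i) * real (k choose n) * real (n choose i)) =
        (\<Sum>n\<in>{i..k}. (-1)^(n-i) * real (k choose n) * real (n choose i))"
    by (rule sum.mono_neutral_right) auto
  also have "\<dots> = (\<Sum>j\<in>{0..k-i}. (-1)^j * real (k choose (j+i)) * real ((j+i) choose i))"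
    using assms sum.shift_bounds_cl_nat_ivl[of "\<lambda>n. (-1)^(n-i) * real (k choose n) * real (n choose i)" 0 i "k-i"]
    by simp
  also have "\<dots> = (\<Sum>j\<in>{0..k-i}. real (k choose i) * ((-1)^j * real ((k-i) choose j)))"
  proof (intro sum.cong refl)
    fix j assume "j \<in> {0..k-i}"
    then have "(k choose (j+i)) * ((j+i) choose i) = (k choose i) * ((k-i) choose j)"
      using choose_mult[of i "j+i" k] assms by auto
    then show "(-1)^j * real (k choose (j+i)) * real ((j+i) choose i) = real (k choose i) * ((-1)^j * real ((k-i) choose j))"
      by (metis (mono_tags, lifting) mult.assoc mult.left_commute of_nat_mult)
  qed
  also have "\<dots> = real (k choose i) * (if k - i = 0 then 1 else 0)"
    by (simp add: sum_distrib_left[symmetric] alt_sum_choose atLeast0AtMost)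
  finally show ?thesis using assms by auto
qed

lemma binomial_inversion:
  fixes lam :: "nat \<Rightarrow> real"
  shows "(\<Sum>n\<le>k. real (k choose n) * (\<Sum>i\<le>n. (-1)^(n-i) * real (n choose i) * lam i)) = lam k"
proof -
  have "(\<Sum>n\<le>k. real (k choose n) * (\<Sum>i\<le>n. (-1)^(n-i) * real (n choose i) * lam i)) =
        (\<Sum>n\<le>k. \<Sum>i\<le>k. (-1)^(n-i) * real (k choose n) * real (n choose i) * lam i)"
  proof (intro sum.cong refl)
    fix n assume "n \<in> {..k}"
    then have "(\<Sum>i\<le>n. (-1)^(n-i) * real (n choose i) * lam i) = (\<Sum>i\<le>k. (-1)^(n-i) * real (n choose i) * lam i)"
      by (intro sum.mono_neutral_left) auto
    then show "real (k choose n) * (\<Sum>i\<le>n. (-1)^(n-i) * real (n choose i) * lam i) =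
        (\<Sum>i\<le>k. (-1)^(n-i) * real (k choose n) * real (n choose i) * lam i)"
      by (simp add: sum_distrib_left algebra_simps)
  qed
  also have "\<dots> = (\<Sum>i\<le>k. (\<Sum>n\<le>k. (-1)^(n-i) * real (k choose n) * real (n choose i)) * lam i)"
    by (subst sum.swap) (simp add: sum_distrib_right)
  also have "\<dots> = (\<Sum>i\<le>k. (if k = i then 1 else 0) * lam i)"
    by (intro sum.cong refl) (simp add: alt_choose_mult)
  also have "\<dots> = (\<Sum>i\<le>k. if i = k then lam i else 0)"
    by (intro sum.cong) auto
  also have "\<dots> = lam k" by simp
  finally show ?thesis .
qed



lemma reidx:
  fixes g :: "nat \<Rightarrow> 'a::comm_monoid_add"
  assumes "p \<le> m"
  shows "(\<Sum>k\<le>m. if p \<le> k then g k else 0) = (\<Sum>j\<le>m-p. g (p + j))"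
proof -
  have "(\<Sum>k\<le>m. if p \<le> k then g k else 0) = (\<Sum>k\<in>{p..m}. if p \<le> k then g k else 0)"
    by (rule sum.mono_neutral_right) auto
  also have "\<dots> = (\<Sum>k\<in>{p..m}. g k)" by (intro sum.cong) auto
  also have "\<dots> = (\<Sum>j\<in>{0..m-p}. g (j + p))"
    using assms sum.shift_bounds_cl_nat_ivl[of g 0 p "m-p"] by simp
  finally show ?thesis by (simp add: atLeast0AtMost add.commute)
qed

lemma tri:
  assumes "p \<le> k" "k \<le> m"
  shows "((real m + \<alpha>) gchoose (m-k)) * ((real k + \<alpha>) gchoose (k-p)) =
         ((real m + \<alpha>) gchoose (m-p)) * real ((m-p) choose (m-k))"
proof -
  have "m - k \<le> m - p" using assms by simp
  note tr = gbinomial_trinomial_revision[OF this, of "real m + \<alpha>"]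
  have e1: "real m + \<alpha> - of_nat (m-k) = real k + \<alpha>" using assms by (simp add: of_nat_diff)
  have e2: "m - p - (m - k) = k - p" using assms by simp
  have e3: "(of_nat (m-p) gchoose (m-k)) = real ((m-p) choose (m-k))" by (simp add: binomial_gbinomial)
  show ?thesis using tr unfolding e1 e2 e3 by (metis mult.commute)
qed

lemma monom_expansion:
  "monom 1 m = (\<Sum>k\<le>m. smult (fact m * (-1)^k * ((real m + \<alpha>) gchoose (m-k))) (laguerre k \<alpha>))"
proof (rule poly_eqI)
  fix p
  show "coeff (monom 1 m) p = coeff (\<Sum>k\<le>m. smult (fact m * (-1)^k * ((real m + \<alpha>) gchoose (m-k))) (laguerre k \<alpha>)) p"
  proof (cases "p \<le> m")
    case False
    then have "coeff (\<Sum>k\<le>m. smult (fact m * (-1)^k * ((real m + \<alpha>) gchoose (m-k))) (laguerre k \<alpha>)) p = 0"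
      by (auto simp: coeff_sum coeff_laguerre intro!: sum.neutral)
    with False show ?thesis by (simp add: coeff_monom)
  next
    case True
    have "coeff (\<Sum>k\<le>m. smult (fact m * (-1)^k * ((real m + \<alpha>) gchoose (m-k))) (laguerre k \<alpha>)) p =
      (\<Sum>k\<le>m. if p \<le> k then fact m * (-1)^k * ((real m + \<alpha>) gchoose (m-k)) * lc \<alpha> k p else 0)"
      by (auto simp: coeff_sum coeff_laguerre intro!: sum.cong)
    also have "\<dots> = (\<Sum>j\<le>m-p. fact m * (-1)^(p+j) * ((real m + \<alpha>) gchoose (m-(p+j))) * lc \<alpha> (p+j) p)"
      by (rule reidx[OF True])
    also have "\<dots> = (\<Sum>j\<le>m-p. (fact m * ((real m + \<alpha>) gchoose (m-p)) / fact p) * ((-1)^j * real ((m-p) choose j)))"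
    proof (intro sum.cong refl)
      fix j assume j: "j \<in> {..m-p}"
      have t: "((real m + \<alpha>) gchoose (m-(p+j))) * ((real (p+j) + \<alpha>) gchoose (p+j-p)) =
         ((real m + \<alpha>) gchoose (m-p)) * real ((m-p) choose (m-(p+j)))"
        using j True by (intro tri) auto
      have s: "(m-p) choose (m-(p+j)) = (m-p) choose j"
        using j True by (metis atMost_iff binomial_symmetric diff_diff_left diff_diff_cancel)
      have "fact m * (-1)^(p+j) * ((real m + \<alpha>) gchoose (m-(p+j))) * lc \<alpha> (p+j) p =
            fact m * ((-1)^(p+j) * (-1)^p) / fact p * (((real m + \<alpha>) gchoose (m-(p+j))) * ((real (p+j) + \<alpha>) gchoose (p+j-p)))"
        by (simp add: lc_def)
      also have "(-1)^(p+j) * (-1)^p = ((-1)^j :: real)"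
        by (simp add: power_add)
      finally show "fact m * (-1)^(p+j) * ((real m + \<alpha>) gchoose (m-(p+j))) * lc \<alpha> (p+j) p =
            (fact m * ((real m + \<alpha>) gchoose (m-p)) / fact p) * ((-1)^j * real ((m-p) choose j))"
        using t s by simp
    qed
    also have "\<dots> = (fact m * ((real m + \<alpha>) gchoose (m-p)) / fact p) * (if m - p = 0 then 1 else 0)"
      by (simp only: sum_distrib_left[symmetric] alt_sum_choose)
    also have "\<dots> = coeff (monom 1 m) p"
      using True by (auto simp: coeff_monom)
    finally show ?thesis by simp
  qed
qed



definition FF :: "real \<Rightarrow> nat \<Rightarrow> real poly fps" where
  "FF \<alpha> n = exp_mxy * (fps_X ^ n * fps_of_poly (subst_xy_x (laguerre n \<alpha>)))"

lemma exp_mxy_nth: "exp_mxy $ i = monom ((-1)^i / fact i) i"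
  by (simp add: exp_mxy_def smult_monom)

lemma FF_raw:
  "coeff (FF \<alpha> n $ m) p = (\<Sum>i=0..m. if n \<le> m - i \<and> i \<le> p \<and> p - i \<le> n then
       (-1)^i / fact i * lc \<alpha> n (p-i) * real ((p-i) choose (m-i-n)) else 0)"
  unfolding FF_def fps_mult_nth[of exp_mxy] coeff_sum
  by (intro sum.cong refl) (auto simp: exp_mxy_nth fps_X_power_mult_nth coeff_monom_mult coeff_subst coeff_laguerre)



lemma pw:
  assumes "d + s \<le> p"
  shows "real ((d+s) choose s) / (fact (p - (d+s)) * fact (d+s)) =
         real (p choose d) * real ((p-d) choose s) / fact p"
proof -
  let ?t = "d+s"
  have f: "fact ?t * fact (p - ?t) * real (p choose ?t) = (fact p :: real)"
    using binomial_fact_lemma[of ?t p] assms by (metis of_nat_fact of_nat_mult)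
  have cm: "real (p choose ?t) * real (?t choose d) = real (p choose d) * real ((p-d) choose s)"
    using choose_mult[of d ?t p] assms by (metis add_diff_cancel_left' le_add1 of_nat_mult)
  have sy: "?t choose s = ?t choose d" by (metis add_diff_cancel_right' binomial_symmetric le_add2)
  have nz: "real (p choose ?t) \<noteq> 0" using assms by simp
  have "real (?t choose s) / (fact (p - ?t) * fact ?t) =
        real (p choose ?t) * real (?t choose d) / (fact ?t * fact (p - ?t) * real (p choose ?t))"
    using nz sy by (simp add: field_simps)
  also have "\<dots> = real (p choose d) * real ((p-d) choose s) / fact p"
    by (simp only: cm f)
  finally show ?thesis .
qed

definition VV :: "real \<Rightarrow> nat \<Rightarrow> nat \<Rightarrow> nat \<Rightarrow> real" where
  "VV \<alpha> m n p = (if p \<le> m \<and> m \<le> n + p then (-1)^p / fact p * ((real m + \<alpha>) gchoose (m-p)) * real (p choose (n+p-m)) else 0)"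

lemma sideB: "coeff (FF \<alpha> n $ m) p = VV \<alpha> m n p"
proof (cases "p \<le> m \<and> n \<le> m \<and> m \<le> n + p")
  case False
  have z: "(\<Sum>i=0..m. if n \<le> m - i \<and> i \<le> p \<and> p - i \<le> n then
       (-1)^i / fact i * lc \<alpha> n (p-i) * real ((p-i) choose (m-i-n)) else 0) = 0"
  proof (intro sum.neutral ballI)
    fix i assume i: "i \<in> {0..m}"
    show "(if n \<le> m - i \<and> i \<le> p \<and> p - i \<le> n then
       (-1)^i / fact i * lc \<alpha> n (p-i) * real ((p-i) choose (m-i-n)) else 0) = 0"
    proof (cases "n \<le> m - i \<and> i \<le> p \<and> p - i \<le> n")
      case True
      with False i have "m > n + p" by auto
      with True have "(p-i) choose (m-i-n) = 0" by (intro binomial_eq_0) auto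
      then show ?thesis by simp
    next
      case False
      then show ?thesis by (subst if_not_P) auto
    qed
  qed
  have "VV \<alpha> m n p = 0"
  proof (cases "p \<le> m \<and> m \<le> n + p")
    case True
    with False have "p choose (n+p-m) = 0" by (intro binomial_eq_0) auto
    then show ?thesis by (simp add: VV_def)
  next
    case False
    then show ?thesis unfolding VV_def by (subst if_not_P) auto
  qed
  with z show ?thesis by (simp add: FF_raw)
next
  case True
  define d where "d = n + p - m"
  have dp: "d \<le> p" "d \<le> n" using True by (auto simp: d_def)
  let ?g = "\<lambda>i. (-1)^i / fact i * lc \<alpha> n (p-i) * real ((p-i) choose (m-i-n)) :: real"
  let ?G = "{i. i \<le> m \<and> n \<le> m - i \<and> i \<le> p \<and> p - i \<le> n}"
  let ?H = "{s. s \<le> p - d \<and> s \<le> n - d}"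
  let ?h = "\<lambda>s. (-1)^p / fact p * real (p choose d) * (real ((p-d) choose s) * ((real n + \<alpha>) gchoose (n - d - s)))"
  have key: "?h s = ?g (p - d - s)" if s: "s \<in> ?H" for s
  proof -
    let ?i = "p - d - s"
    have e1: "p - ?i = d + s" using s dp by auto
    have e2: "m - ?i - n = s" using s dp True by (auto simp: d_def)
    have e3: "n - (d + s) = n - d - s" by simp
    have sg: "(-1)^?i * (-1)^(d+s) = ((-1)^p :: real)"
    proof -
      have ip: "?i + (d + s) = p" using s dp by auto
      show ?thesis unfolding power_add[symmetric] ip ..
    qed
    have "?g ?i = ((-1)^?i * (-1)^(d+s)) * ((real n + \<alpha>) gchoose (n - d - s)) *
                 (real ((d+s) choose s) / (fact (p - (d+s)) * fact (d+s)))"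
      unfolding e1 e2 lc_def e3 using s dp by (simp add: field_simps)
    also have "\<dots> = ?h s"
    proof -
      have dsp: "d + s \<le> p" using s dp by auto
      show ?thesis unfolding sg using pw[OF dsp] by (simp add: field_simps)
    qed
    finally show "?h s = ?g ?i" by simp
  qed
  have "coeff (FF \<alpha> n $ m) p = (\<Sum>i=0..m. if n \<le> m - i \<and> i \<le> p \<and> p - i \<le> n then ?g i else 0)"
    by (simp add: FF_raw)
  also have "\<dots> = (\<Sum>i\<in>?G. ?g i)"
    by (rule sum.mono_neutral_cong_right) auto
  also have "\<dots> = (\<Sum>s\<in>?H. ?h s)"
  proof (rule sum.reindex_bij_witness[where i="\<lambda>s. p - d - s" and j="\<lambda>i. p - d - i"])
    fix i assume "i \<in> ?G" then show "p - d - (p - d - i) = i" using True by (auto simp: d_def)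
  next
    fix i assume "i \<in> ?G" then show "p - d - i \<in> ?H" using True by (auto simp: d_def)
  next
    fix s assume "s \<in> ?H" then show "p - d - (p - d - s) = s" using True by (auto simp: d_def)
  next
    fix s assume "s \<in> ?H" then show "p - d - s \<in> ?G" using True by (auto simp: d_def)
  next
    fix i assume i: "i \<in> ?G"
    have iH: "p - d - i \<in> ?H" using i True by (auto simp: d_def)
    have ii: "p - d - (p - d - i) = i" using i True by (auto simp: d_def)
    show "?h (p - d - i) = ?g i" using key[OF iH] unfolding ii .
  qed
  also have "\<dots> = (-1)^p / fact p * real (p choose d) *
       (\<Sum>s=0..n-d. (real (p-d) gchoose s) * ((real n + \<alpha>) gchoose (n - d - s)))"
    unfolding sum_distrib_left[symmetric]
    by (intro arg_cong[where f="\<lambda>x. _ * x"] sum.mono_neutral_cong_left)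
       (auto simp: binomial_gbinomial[symmetric] binomial_eq_0)
  also have "\<dots> = (-1)^p / fact p * real (p choose d) * ((real (p-d) + (real n + \<alpha>)) gchoose (n-d))"
    by (simp only: gbinomial_Vandermonde)
  also have "\<dots> = VV \<alpha> m n p"
  proof -
    have "real (p-d) + (real n + \<alpha>) = real m + \<alpha>" using True dp by (simp add: d_def of_nat_diff)
    moreover have "n - d = m - p" using True by (auto simp: d_def)
    ultimately show ?thesis using True by (simp add: VV_def d_def)
  qed
  finally show ?thesis .
qed



lemma sq_sign: "(-1::real)^p * (-1)^p = 1"
  by (metis power_add mult_2 power_minus1_even)

lemma sideA:
  "coeff (\<Sum>k\<le>m. smult (real (k choose n) * (-1)^(m+k) * ((real m + \<alpha>) gchoose (m-k))) (laguerre k \<alpha>)) p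
    = VV \<alpha> m n p"
proof (cases "p \<le> m")
  case False
  then show ?thesis
    by (auto simp: coeff_sum coeff_laguerre VV_def intro!: sum.neutral)
next
  case True
  define q where "q = m - p"
  have mq: "m = p + q" using True by (simp add: q_def)
  have "coeff (\<Sum>k\<le>m. smult (real (k choose n) * (-1)^(m+k) * ((real m + \<alpha>) gchoose (m-k))) (laguerre k \<alpha>)) p
     = (\<Sum>k\<le>m. if p \<le> k then real (k choose n) * (-1)^(m+k) * ((real m + \<alpha>) gchoose (m-k)) * lc \<alpha> k p else 0)"
    by (auto simp: coeff_sum coeff_laguerre intro!: sum.cong)
  also have "\<dots> = (\<Sum>j\<le>m-p. real ((p+j) choose n) * (-1)^(m+(p+j)) * ((real m + \<alpha>) gchoose (m-(p+j))) * lc \<alpha> (p+j) p)"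
    by (rule reidx[OF True])
  also have "\<dots> = (\<Sum>j\<le>q. ((-1)^p / fact p * ((real m + \<alpha>) gchoose (m-p)) * (-1)^q) *
                    ((-1)^j * real (q choose j) * real ((p + j) choose n)))"
  proof (intro sum.cong, simp add: q_def)
    fix j assume j: "j \<in> {..q}"
    have t: "((real m + \<alpha>) gchoose (m-(p+j))) * ((real (p+j) + \<alpha>) gchoose (p+j-p)) =
         ((real m + \<alpha>) gchoose (m-p)) * real ((m-p) choose (m-(p+j)))"
      using j True by (intro tri) (auto simp: q_def)
    have s: "(m-p) choose (m-(p+j)) = q choose j"
      using j True unfolding q_def by (metis atMost_iff binomial_symmetric diff_diff_left q_def)
    have sg: "(-1)^(m+(p+j)) * (-1)^p = ((-1)^p * (-1)^q * (-1)^j :: real)"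
    proof -
      have "(-1::real)^(m+(p+j)) * (-1)^p = ((-1)^p * (-1)^q * (-1)^j) * ((-1)^p * (-1)^p)"
        unfolding mq by (simp add: power_add mult_ac)
      then show ?thesis by (simp add: sq_sign)
    qed
    have "real ((p+j) choose n) * (-1)^(m+(p+j)) * ((real m + \<alpha>) gchoose (m-(p+j))) * lc \<alpha> (p+j) p
        = real ((p+j) choose n) * ((-1)^(m+(p+j)) * (-1)^p) / fact p *
          (((real m + \<alpha>) gchoose (m-(p+j))) * ((real (p+j) + \<alpha>) gchoose (p+j-p)))"
      by (simp add: lc_def)
    also have "\<dots> = ((-1)^p / fact p * ((real m + \<alpha>) gchoose (m-p)) * (-1)^q) *
                    ((-1)^j * real (q choose j) * real ((p + j) choose n))"
      unfolding t s sg by (simp only: divide_inverse mult_ac)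
    finally show "real ((p+j) choose n) * (-1)^(m+(p+j)) * ((real m + \<alpha>) gchoose (m-(p+j))) * lc \<alpha> (p+j) p
        = ((-1)^p / fact p * ((real m + \<alpha>) gchoose (m-p)) * (-1)^q) *
                    ((-1)^j * real (q choose j) * real ((p + j) choose n))" .
  qed
  also have "\<dots> = ((-1)^p / fact p * ((real m + \<alpha>) gchoose (m-p)) * (-1)^q) *
        (if q \<le> n then (-1)^q * real (p choose (n - q)) else 0)"
    by (simp only: sum_distrib_left[symmetric] diff_identity)
  also have "\<dots> = VV \<alpha> m n p"
  proof (cases "q \<le> n")
    case True
    have "(-1::real)^q * (-1)^q = 1" by (rule sq_sign)
    moreover have "n - q = n + p - m" using True mq by simp
    ultimately show ?thesis using True mq by (simp add: VV_def mult_ac)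
  next
    case False
    then show ?thesis using mq by (simp add: VV_def)
  qed
  finally show ?thesis .
qed



lemma smult_sum_r: "smult c (sum f A) = sum (\<lambda>x. smult c (f x)) A"
  by (induction A rule: infinite_finite_induct) (auto simp: smult_add_right)

theorem lemma2p2:
  fixes \<alpha> :: real and lam :: "nat \<Rightarrow> real" and T :: "real poly \<Rightarrow> real poly"
  assumes "\<alpha> > -1"
    and "\<And>p q. T (p + q) = T p + T q"
    and "\<And>c p. T (smult c p) = smult c (T p)"
    and "\<And>n. T (laguerre n \<alpha>) = smult (lam n) (laguerre n \<alpha>)"
  shows "symbol T =
    exp_mxy * fps_order_sum (\<lambda>n.
      fps_const [:\<Sum>k\<le>n. (-1) ^ (n - k) * real (n choose k) * lam k:] * fps_X ^ n
      * fps_of_poly (subst_xy_x (laguerre n \<alpha>)))"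
proof -
  note Tadd = assms(2) and Tsm = assms(3) and Tl = assms(4)
  define a where "a = (\<lambda>n. \<Sum>k\<le>n. (-1) ^ (n - k) * real (n choose k) * lam k)"
  have T0: "T 0 = 0" using Tsm[of 0 0] by simp
  have Tsum: "T (\<Sum>x\<in>A. f x) = (\<Sum>x\<in>A. T (f x))" if "finite A" for A :: "nat set" and f
    using that by (induction A rule: finite_induct) (auto simp: T0 Tadd)
  have Tmon: "T (monom 1 m) = (\<Sum>k\<le>m. smult (fact m * (-1)^k * ((real m + \<alpha>) gchoose (m-k)) * lam k) (laguerre k \<alpha>))" for m
    by (subst monom_expansion[of m \<alpha>]) (simp add: Tsum Tsm Tl)
  have lam_inv: "lam k = (\<Sum>n\<le>m. real (k choose n) * a n)" if "k \<le> m" for k m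
  proof -
    have "(\<Sum>n\<le>m. real (k choose n) * a n) = (\<Sum>n\<le>k. real (k choose n) * a n)"
      using that by (intro sum.mono_neutral_right) auto
    then show ?thesis using binomial_inversion[of k lam] by (simp add: a_def)
  qed
  show ?thesis
  proof (rule fps_ext)
    fix m
    have "symbol T $ m = smult ((-1)^m / fact m) (T (monom 1 m))"
      by (simp add: symbol_def)
    also have "\<dots> = (\<Sum>k\<le>m. smult ((-1)^(m+k) * ((real m + \<alpha>) gchoose (m-k)) * lam k) (laguerre k \<alpha>))"
      unfolding Tmon smult_sum_r
      by (intro sum.cong refl) (simp add: power_add mult_ac)
    also have "\<dots> = (\<Sum>k\<le>m. \<Sum>n\<le>m. smult (a n) (smult (real (k choose n) * (-1)^(m+k) * ((real m + \<alpha>) gchoose (m-k))) (laguerre k \<alpha>)))"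
      by (intro sum.cong refl) (simp add: lam_inv smult_sum smult_sum_r sum_distrib_left sum_distrib_right mult_ac)
    also have "\<dots> = (\<Sum>n\<le>m. smult (a n) (\<Sum>k\<le>m. smult (real (k choose n) * (-1)^(m+k) * ((real m + \<alpha>) gchoose (m-k))) (laguerre k \<alpha>)))"
      by (subst sum.swap) (simp add: smult_sum_r)
    also have "\<dots> = (\<Sum>n\<le>m. smult (a n) (FF \<alpha> n $ m))"
      by (intro sum.cong refl arg_cong[where f="smult _"] poly_eqI) (simp add: sideA sideB)
    also have "\<dots> = (exp_mxy * fps_order_sum (\<lambda>n.
      fps_const [:a n:] * fps_X ^ n * fps_of_poly (subst_xy_x (laguerre n \<alpha>)))) $ m"
    proof -
      let ?P = "\<lambda>n. fps_X ^ n * fps_of_poly (subst_xy_x (laguerre n \<alpha>))"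
      have "(exp_mxy * fps_order_sum (\<lambda>n. fps_const [:a n:] * fps_X ^ n * fps_of_poly (subst_xy_x (laguerre n \<alpha>)))) $ m
          = (\<Sum>i=0..m. exp_mxy $ i * (\<Sum>n\<le>m - i. [:a n:] * ?P n $ (m - i)))"
        by (simp add: fps_mult_nth[of exp_mxy] fps_order_sum_def mult.assoc)
      also have "\<dots> = (\<Sum>i=0..m. exp_mxy $ i * (\<Sum>n\<le>m. [:a n:] * ?P n $ (m - i)))"
      proof (rule sum.cong[OF refl])
        fix i assume "i \<in> {0..m}"
        have "(\<Sum>n\<le>m - i. [:a n:] * ?P n $ (m - i)) = (\<Sum>n\<le>m. [:a n:] * ?P n $ (m - i))"
          by (intro sum.mono_neutral_left) (auto simp: fps_X_power_mult_nth)
        then show "exp_mxy $ i * (\<Sum>n\<le>m - i. [:a n:] * ?P n $ (m - i)) = exp_mxy $ i * (\<Sum>n\<le>m. [:a n:] * ?P n $ (m - i))"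
          by simp
      qed
      also have "\<dots> = (\<Sum>n\<le>m. [:a n:] * (FF \<alpha> n $ m))"
        by (simp add: FF_def fps_mult_nth[of exp_mxy] sum_distrib_left sum_distrib_right mult_ac)
           (subst sum.swap, simp)
      finally show ?thesis by simp
    qed
    finally show "symbol T $ m = (exp_mxy * fps_order_sum (\<lambda>n.
      fps_const [:\<Sum>k\<le>n. (-1) ^ (n - k) * real (n choose k) * lam k:] * fps_X ^ n
      * fps_of_poly (subst_xy_x (laguerre n \<alpha>)))) $ m" by (simp add: a_def)
  qed
qed

end
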